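(* Let $f:\mathbb{R}^n\to\mathbb{R}$ be twice continuously differentiable with $L$-Lipschitz gradient. For a step size $0<\alpha<\frac1L$, the map $g_{\alpha f}=g_{\alpha f}^p\circ g_{\alpha f}^{p-1}\circ\cdots\circ g_{\alpha f}^1:\mathbb{R}^n\to\mathbb{R}^n$ is a diffeomorphism.
   Context: $\|\nabla f(x)-\nabla f(y)\|\le L\|x-y\|$ for all $x,y$, $L>0$. The variable is partitioned as $x=(x(1),\dots,x(p))$, $x(s)\in\mathbb{R}^{n_s}$, $\sum_s n_s=n$; $U_s\in\mathbb{R}^{n\times n_s}$ is the $s$-th block-column of $I_n$ and $\nabla_sf(x)=U_s^T\nabla f(x)$. For $\alpha>0$, $g_{\alpha f}^s(x)=x-\alpha U_s\nabla_s f(x)$, $s=1,\dots,p$. *)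

theory Defs
  imports "HOL-Analysis.Analysis"
begin

definition C1_map :: "('a::euclidean_space \<Rightarrow> 'b::euclidean_space) \<Rightarrow> bool" where
  "C1_map \<phi> \<longleftrightarrow> (\<exists>D :: 'a \<Rightarrow> ('a \<Rightarrow>\<^sub>L 'b).
      (\<forall>x. (\<phi> has_derivative blinfun_apply (D x)) (at x)) \<and> continuous_on UNIV D)"

definition diffeomorphism :: "('a::euclidean_space \<Rightarrow> 'a) \<Rightarrow> bool" where
  "diffeomorphism g \<longleftrightarrow> (\<exists>h. (\<forall>x. h (g x) = x) \<and> (\<forall>y. g (h y) = y) \<and> C1_map g \<and> C1_map h)"

text \<open>Block gradient step g^s_{alpha f}(x) = x - alpha U_s grad_s f(x), where the block s
is given by the index set B s and gradf is the gradient of f.\<close>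
definition block_step ::
  "real \<Rightarrow> (real^'n \<Rightarrow> real^'n) \<Rightarrow> ('n set) \<Rightarrow> real^'n \<Rightarrow> real^'n" where
  "block_step \<alpha> gradf Bs x = x - \<alpha> *\<^sub>R (\<chi> i. if i \<in> Bs then gradf x $ i else 0)"

text \<open>The composition g^p o ... o g^1 (blocks indexed 0,...,p-1; block 0 applied first).\<close>
definition block_map ::
  "real \<Rightarrow> (real^'n \<Rightarrow> real^'n) \<Rightarrow> nat \<Rightarrow> (nat \<Rightarrow> 'n set) \<Rightarrow> real^'n \<Rightarrow> real^'n" where
  "block_map \<alpha> gradf p B = fold (\<lambda>s h. block_step \<alpha> gradf (B s) \<circ> h) [0..<p] id"

end

theory Submission
  imports Defs
begin

lemma C1_map_id: "C1_map (id :: 'a::euclidean_space \<Rightarrow> 'a)"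
  unfolding C1_map_def
  by (rule exI[of _ "\<lambda>_. id_blinfun"]) (auto simp: id_def)

lemma C1_map_compose:
  fixes f :: "'a::euclidean_space \<Rightarrow> 'b::euclidean_space" and g :: "'b \<Rightarrow> 'c::euclidean_space"
  assumes "C1_map f" "C1_map g" shows "C1_map (g \<circ> f)"
proof -
  obtain Df where Df: "\<And>x. (f has_derivative blinfun_apply (Df x)) (at x)" "continuous_on UNIV Df"
    using assms(1) unfolding C1_map_def by blast
  obtain Dg where Dg: "\<And>x. (g has_derivative blinfun_apply (Dg x)) (at x)" "continuous_on UNIV Dg"
    using assms(2) unfolding C1_map_def by blast
  have fc: "continuous_on UNIV f"
    using Df(1) has_derivative_continuous continuous_at_imp_continuous_on by blast
  have "((g \<circ> f) has_derivative blinfun_apply (Dg (f x) o\<^sub>L Df x)) (at x)" for x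
  proof -
    have "((g \<circ> f) has_derivative (blinfun_apply (Dg (f x)) \<circ> blinfun_apply (Df x))) (at x)"
      by (rule diff_chain_at[OF Df(1) Dg(1)])
    moreover have "blinfun_apply (Dg (f x)) \<circ> blinfun_apply (Df x) = blinfun_apply (Dg (f x) o\<^sub>L Df x)"
      by (auto simp: fun_eq_iff)
    ultimately show ?thesis by simp
  qed
  moreover have "continuous_on UNIV (\<lambda>x. Dg (f x) o\<^sub>L Df x)"
    by (intro continuous_intros continuous_on_compose2[OF Dg(2) fc] Df(2)) auto
  ultimately show ?thesis unfolding C1_map_def by (intro exI[of _ "\<lambda>x. Dg (f x) o\<^sub>L Df x"]) blast
qed

lemma diffeomorphism_id: "diffeomorphism (id :: 'a::euclidean_space \<Rightarrow> 'a)"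
  unfolding diffeomorphism_def using C1_map_id by (intro exI[of _ id]) auto

lemma diffeomorphism_compose:
  fixes f g :: "'a::euclidean_space \<Rightarrow> 'a"
  assumes "diffeomorphism f" "diffeomorphism g" shows "diffeomorphism (g \<circ> f)"
proof -
  obtain hf where hf: "\<forall>x. hf (f x) = x" "\<forall>y. f (hf y) = y" "C1_map f" "C1_map hf"
    using assms(1) unfolding diffeomorphism_def by blast
  obtain hg where hg: "\<forall>x. hg (g x) = x" "\<forall>y. g (hg y) = y" "C1_map g" "C1_map hg"
    using assms(2) unfolding diffeomorphism_def by blast
  show ?thesis unfolding diffeomorphism_def
    apply (rule exI[of _ "hf \<circ> hg"])
    using hf hg C1_map_compose by auto
qed

lemma near_id_diffeo:
  fixes k :: "'a::euclidean_space \<Rightarrow> 'a" and K :: "'a \<Rightarrow> 'a \<Rightarrow>\<^sub>L 'a"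
  assumes kd: "\<And>x. (k has_derivative blinfun_apply (K x)) (at x)"
    and Kc: "continuous_on UNIV K"
    and c: "0 \<le> c" "c < 1"
    and lip: "\<And>x y. norm (k x - k y) \<le> c * norm (x - y)"
  shows "diffeomorphism (\<lambda>x. x - k x)"
proof -
  have Kb: "norm (K x v) \<le> c * norm v" for x v
  proof (rule field_le_epsilon)
    fix e :: real assume e: "e > 0"
    show "norm (K x v) \<le> c * norm v + e"
    proof (cases "v = 0")
      case True then show ?thesis using e by simp
    next
      case False
      then have nv: "norm v > 0" by simp
      obtain d where d: "d > 0" and dd: "\<And>y. norm (y - x) < d \<Longrightarrow>
          norm (k y - k x - K x (y - x)) \<le> (e / norm v) * norm (y - x)"
        using kd[of x] e nv unfolding has_derivative_at_alt by (meson divide_pos_pos)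
      define t where "t = d / (2 * norm v)"
      have t: "t > 0" using d nv by (simp add: t_def)
      have ny: "norm ((x + t *\<^sub>R v) - x) = t * norm v" using t by simp
      have "t * norm v < d" using d nv by (simp add: t_def)
      then have "norm ((x + t *\<^sub>R v) - x) < d" using ny by linarith
      from dd[OF this] have 1: "norm (k (x + t *\<^sub>R v) - k x - K x (t *\<^sub>R v)) \<le> (e / norm v) * (t * norm v)"
        unfolding ny by simp
      have 2: "norm (k (x + t *\<^sub>R v) - k x) \<le> c * (t * norm v)"
        using lip[of "x + t *\<^sub>R v" x] ny by (simp only:)
      have "t * norm (K x v) = norm (K x (t *\<^sub>R v))"
        using t by (simp add: blinfun.scaleR_right)
      also have "\<dots> \<le> norm (k (x + t *\<^sub>R v) - k x) + norm (k (x + t *\<^sub>R v) - k x - K x (t *\<^sub>R v))"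
        using norm_triangle_sub[of "K x (t *\<^sub>R v)" "k (x + t *\<^sub>R v) - k x"]
        by (simp add: norm_minus_commute)
      also have "\<dots> \<le> c * (t * norm v) + (e / norm v) * (t * norm v)"
        using 1 2 by linarith
      also have "\<dots> = t * (c * norm v + e)" using nv by (simp add: field_simps)
      finally show ?thesis using t by simp
    qed
  qed
  define A where "A x = id_blinfun - K x" for x
  have Aap: "A x v = v - K x v" for x v by (simp add: A_def blinfun.diff_left)
  have Alow: "(1 - c) * norm v \<le> norm (A x v)" for x v
  proof -
    have "norm v \<le> norm (A x v) + norm (K x v)"
      using norm_triangle_ineq[of "A x v" "K x v"] by (simp add: Aap)
    then show ?thesis using Kb[of x v] by (simp add: algebra_simps)
  qed
  have "\<exists>Mx::'a \<Rightarrow>\<^sub>L 'a. (\<forall>v. blinfun_apply Mx (A x v) = v) \<and> (\<forall>w. A x (blinfun_apply Mx w) = w)" for x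
  proof -
    have lin: "linear (blinfun_apply (A x))"
      using blinfun.bounded_linear_right bounded_linear.linear by blast
    have inj: "inj (blinfun_apply (A x))"
    proof (rule injI)
      fix a b assume "A x a = A x b"
      then have "A x (a - b) = 0" by (simp add: blinfun.diff_right)
      then have "(1 - c) * norm (a - b) \<le> 0" using Alow[of "a - b" x] by simp
      then show "a = b" using c by (simp add: mult_le_0_iff)
    qed
    obtain g where g: "linear g" "g \<circ> blinfun_apply (A x) = id"
      using linear_injective_left_inverse[OF lin inj] by blast
    have g2: "blinfun_apply (A x) \<circ> g = id"
      using g eucl.linear_inverse_left[OF lin g(1)] by simp
    have bl: "bounded_linear g" using g(1) linear_conv_bounded_linear by blast
    show ?thesis
      apply (rule exI[of _ "Blinfun g"])
      using g g2 by (simp add: bounded_linear_Blinfun_apply[OF bl] fun_eq_iff)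
  qed
  then have "\<forall>x. \<exists>Mx::'a \<Rightarrow>\<^sub>L 'a. (\<forall>v. blinfun_apply Mx (A x v) = v) \<and> (\<forall>w. A x (blinfun_apply Mx w) = w)"
    by blast
  from choice[OF this] obtain M :: "'a \<Rightarrow> 'a \<Rightarrow>\<^sub>L 'a"
    where M: "\<And>x. (\<forall>v. M x (A x v) = v) \<and> (\<forall>w. A x (M x w) = w)"
    by blast
  have M1: "\<And>x v. M x (A x v) = v" and M2: "\<And>x w. A x (M x w) = w"
    using M by auto
  have Mb: "norm (M x w) \<le> norm w / (1 - c)" for x w
    using Alow[of "M x w" x] c by (simp add: M2 field_simps)
  have Mdiff: "norm (M x - M y) \<le> norm (K x - K y) / (1 - c)^2" for x y
  proof (rule norm_blinfun_bound)
    show "0 \<le> norm (K x - K y) / (1 - c)^2" by simp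
  next
    fix w
    define a where "a = M x w"
    define b where "b = M y w"
    have "A x a = A y b" using M2 by (simp add: a_def b_def)
    then have "A x (a - b) = (K x - K y) b"
      by (simp add: Aap blinfun.diff_right blinfun.diff_left algebra_simps)
    then have "M x (A x (a - b)) = M x ((K x - K y) b)" by simp
    then have "a - b = M x ((K x - K y) b)" by (simp only: M1)
    then have "norm (a - b) \<le> norm ((K x - K y) b) / (1 - c)" using Mb by simp
    also have "\<dots> \<le> norm (K x - K y) * norm b / (1 - c)"
      using c by (intro divide_right_mono norm_blinfun) auto
    also have "\<dots> \<le> norm (K x - K y) * (norm w / (1 - c)) / (1 - c)"
      using c Mb[of y w] by (intro divide_right_mono mult_left_mono) (auto simp: b_def)
    finally show "norm (blinfun_apply (M x - M y) w) \<le> norm (K x - K y) / (1 - c)^2 * norm w"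
      by (simp add: a_def b_def blinfun.diff_left power2_eq_square)
  qed
  have Mc: "continuous_on UNIV M"
    unfolding continuous_on_iff
  proof (intro ballI allI impI)
    fix x e assume "0 < (e::real)"
    then have "e * (1 - c)^2 > 0" using c by simp
    then obtain d where d: "d > 0" "\<And>y. dist y x < d \<Longrightarrow> dist (K y) (K x) < e * (1 - c)^2"
      using Kc unfolding continuous_on_iff by blast
    show "\<exists>d>0. \<forall>x'\<in>UNIV. dist x' x < d \<longrightarrow> dist (M x') (M x) < e"
    proof (intro exI[of _ d] conjI ballI impI)
      fix y assume "dist y x < d"
      then have "norm (K y - K x) < e * (1 - c)^2" using d by (simp add: dist_norm)
      then have "norm (K y - K x) / (1 - c)^2 < e" using c by (simp add: field_simps)
      then show "dist (M y) (M x) < e" using Mdiff[of y x] by (simp add: dist_norm)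
    qed (use d in auto)
  qed
  define \<phi> where "\<phi> x = x - k x" for x
  have low: "(1 - c) * norm (a - b) \<le> norm (\<phi> a - \<phi> b)" for a b
  proof -
    have "norm (a - b) \<le> norm (\<phi> a - \<phi> b) + norm (k a - k b)"
      using norm_triangle_ineq[of "\<phi> a - \<phi> b" "k a - k b"] by (simp add: \<phi>_def algebra_simps)
    then show ?thesis using lip[of a b] by (simp add: algebra_simps)
  qed
  have surj: "\<exists>z. \<phi> z = y" for y
  proof -
    have "\<exists>!z. y + k z = z"
      by (rule banach_fix_type[OF c]) (simp add: dist_norm lip)
    then obtain z where z: "y + k z = z" by blast
    then have "y = z - k z" by (simp add: eq_diff_eq)
    then show ?thesis by (auto simp: \<phi>_def)
  qed
  define h where "h y = (SOME z. \<phi> z = y)" for y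
  have h1: "\<phi> (h y) = y" for y unfolding h_def by (rule someI_ex[OF surj])
  have inj: "a = b" if "\<phi> a = \<phi> b" for a b
    using low[of a b] that c by (simp add: mult_le_0_iff)
  have h2: "h (\<phi> x) = x" for x by (rule inj) (simp add: h1)
  have hlip: "norm (h y - h y') \<le> norm (y - y') / (1 - c)" for y y'
    using low[of "h y" "h y'"] c by (simp add: h1 field_simps)
  have hc: "continuous_on UNIV h"
    unfolding continuous_on_iff
  proof (intro ballI allI impI)
    fix x e assume e: "0 < (e::real)"
    show "\<exists>d>0. \<forall>x'\<in>UNIV. dist x' x < d \<longrightarrow> dist (h x') (h x) < e"
    proof (intro exI[of _ "e * (1 - c)"] conjI ballI impI)
      fix y assume "dist y x < e * (1 - c)"
      then have "norm (y - x) / (1 - c) < e" using c by (simp add: field_simps dist_norm)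
      then show "dist (h y) (h x) < e" using hlip[of y x] by (simp add: dist_norm)
    qed (use e c in auto)
  qed
  have \<phi>d: "(\<phi> has_derivative blinfun_apply (A x)) (at x)" for x
  proof -
    have "(\<phi> has_derivative (\<lambda>v. v - K x v)) (at x)"
      unfolding \<phi>_def by (intro derivative_intros kd)
    moreover have "blinfun_apply (A x) = (\<lambda>v. v - K x v)" by (simp add: Aap fun_eq_iff)
    ultimately show ?thesis by simp
  qed
  have C1\<phi>: "C1_map \<phi>"
    unfolding C1_map_def using \<phi>d by (intro exI[of _ A]) (auto simp: A_def intro!: continuous_intros Kc)
  have hd: "(h has_derivative blinfun_apply (M (h y))) (at y)" for y
  proof (rule has_derivative_inverse_basic[where f = \<phi> and T = UNIV])
    show "(\<phi> has_derivative blinfun_apply (A (h y))) (at (h y))" by (rule \<phi>d)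
    show "bounded_linear (blinfun_apply (M (h y)))" by (rule blinfun.bounded_linear_right)
    show "blinfun_apply (M (h y)) \<circ> blinfun_apply (A (h y)) = id" by (simp add: M1 fun_eq_iff)
    show "continuous (at y) h" using hc by (simp add: continuous_on_eq_continuous_at)
  qed (auto simp: h1)
  have C1h: "C1_map h"
    unfolding C1_map_def using hd
    by (intro exI[of _ "\<lambda>y. M (h y)"]) (auto intro: continuous_on_compose2[OF Mc hc])
  show ?thesis
    unfolding diffeomorphism_def
    using C1\<phi> C1h h1 h2 by (intro exI[of _ h]) (simp add: \<phi>_def[abs_def])
qed

lemma block_map_Suc:
  "block_map \<alpha> gradf (Suc p) B = block_step \<alpha> gradf (B p) \<circ> block_map \<alpha> gradf p B"
  unfolding block_map_def by simp

lemma proj_bl: "bounded_linear (\<lambda>v::real^'n. \<chi> i. if i \<in> Bs then v $ i else 0)"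
proof -
  have "linear (\<lambda>v::real^'n. \<chi> i. if i \<in> Bs then v $ i else 0)"
    by (rule linearI) (auto simp: vec_eq_iff)
  then show ?thesis using linear_conv_bounded_linear by blast
qed

lemma proj_norm: "norm (\<chi> i. if i \<in> Bs then v $ i else 0 :: real^'n) \<le> norm v"
  unfolding norm_vec_def by (rule L2_set_mono) auto

lemma block_step_diffeo:
  fixes gradf :: "real^'n \<Rightarrow> real^'n" and H :: "real^'n \<Rightarrow> ((real^'n) \<Rightarrow>\<^sub>L (real^'n))"
  assumes hess: "\<And>x. (gradf has_derivative blinfun_apply (H x)) (at x)"
    and hess_cont: "continuous_on UNIV H"
    and lipschitz: "\<And>x y. norm (gradf x - gradf y) \<le> L * norm (x - y)"
    and c: "0 \<le> \<alpha> * L" "\<alpha> * L < 1" "0 < \<alpha>"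
  shows "diffeomorphism (block_step \<alpha> gradf Bs)"
proof -
  define P where "P = (\<lambda>v::real^'n. \<chi> i. if i \<in> Bs then v $ i else 0)"
  have bl: "bounded_linear P" unfolding P_def by (rule proj_bl)
  have bl2: "bounded_linear (\<lambda>v. \<alpha> *\<^sub>R P v)"
    using bl by (intro bounded_linear_intros)
  define k where "k x = \<alpha> *\<^sub>R P (gradf x)" for x
  define K where "K x = \<alpha> *\<^sub>R (Blinfun P o\<^sub>L H x)" for x
  have eq: "block_step \<alpha> gradf Bs = (\<lambda>x. x - k x)"
    by (auto simp: fun_eq_iff block_step_def k_def P_def)
  have kd: "(k has_derivative blinfun_apply (K x)) (at x)" for x
  proof -
    have "(k has_derivative (\<lambda>h. \<alpha> *\<^sub>R P (H x h))) (at x)"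
      unfolding k_def using bounded_linear.has_derivative[OF bl2 hess] .
    moreover have "blinfun_apply (K x) = (\<lambda>h. \<alpha> *\<^sub>R P (H x h))"
      by (simp add: K_def fun_eq_iff blinfun.scaleR_left bounded_linear_Blinfun_apply[OF bl])
    ultimately show ?thesis by simp
  qed
  have Kc: "continuous_on UNIV K"
    unfolding K_def by (intro continuous_intros hess_cont)
  have lip: "norm (k x - k y) \<le> (\<alpha> * L) * norm (x - y)" for x y
  proof -
    have "k x - k y = \<alpha> *\<^sub>R P (gradf x - gradf y)"
      by (simp add: k_def linear_diff[OF bounded_linear.linear[OF bl]] scaleR_diff_right)
    then have "norm (k x - k y) = \<alpha> * norm (P (gradf x - gradf y))" using c by simp
    also have "\<dots> \<le> \<alpha> * norm (gradf x - gradf y)"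
      using c proj_norm unfolding P_def by (intro mult_left_mono) auto
    also have "\<dots> \<le> \<alpha> * (L * norm (x - y))"
      using c lipschitz by (intro mult_left_mono) auto
    finally show ?thesis by simp
  qed
  show ?thesis unfolding eq
    by (rule near_id_diffeo[OF kd Kc c(1) c(2) lip])
qed

theorem proposition1:
  fixes f :: "real^'n \<Rightarrow> real"
    and gradf :: "real^'n \<Rightarrow> real^'n"
    and H :: "real^'n \<Rightarrow> ((real^'n) \<Rightarrow>\<^sub>L (real^'n))"
    and L \<alpha> :: real and p :: nat and B :: "nat \<Rightarrow> 'n set"
  assumes grad: "\<And>x. (f has_derivative (\<lambda>h. gradf x \<bullet> h)) (at x)"
    and hess: "\<And>x. (gradf has_derivative blinfun_apply (H x)) (at x)"
    and hess_cont: "continuous_on UNIV H"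
    and L_pos: "L > 0"
    and lipschitz: "\<And>x y. norm (gradf x - gradf y) \<le> L * norm (x - y)"
    and blocks_disj: "\<And>s t. s < p \<Longrightarrow> t < p \<Longrightarrow> s \<noteq> t \<Longrightarrow> B s \<inter> B t = {}"
    and blocks_cover: "(\<Union>s<p. B s) = UNIV"
    and blocks_nonempty: "\<And>s. s < p \<Longrightarrow> B s \<noteq> {}"
    and step: "0 < \<alpha>" "\<alpha> < 1 / L"
  shows "diffeomorphism (block_map \<alpha> gradf p B)"
proof -
  have c: "0 \<le> \<alpha> * L" "\<alpha> * L < 1" "0 < \<alpha>"
    using step L_pos by (auto simp: field_simps)
  have "diffeomorphism (block_map \<alpha> gradf q B)" for q
  proof (induction q)
    case 0
    then show ?case using diffeomorphism_id by (simp add: block_map_def id_def)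
  next
    case (Suc q)
    then show ?case unfolding block_map_Suc
      by (intro diffeomorphism_compose block_step_diffeo[OF hess hess_cont lipschitz c])
  qed
  then show ?thesis .
qed

end
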